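(* Let $m\ge 2$ be a non-prime integer and $n=2^m-1$. Then there is no monomial power permutation $F(x)=x^t$ of $GF(2^m)$ for which the self-embedding $S\cup F(S)$ lies in a closed surface, where $S=STS(\mathcal H^n)$.
   Context: A monomial power permutation is $F(x)=x^t$ with $\gcd(t,n)=1$. $S=STS(\mathcal H^n)$ is the set of 3-subsets $\{a,b,c\}$ of nonzero elements of $GF(2^m)$ with $a+b+c=0$; $F(S)=\{\{F(a),F(b),F(c)\}:\{a,b,c\}\in S\}$. For nonzero $a$, let $P_a=GF(2^m)\setminus\{0,a\}$, $s_a(y)=a+y$, $\psi_a(y)=F(F^{-1}(a)+F^{-1}(y))$; the rotation lines at $a$ are the orbits on $P_a$ of the group generated by $s_a,\psi_a$, and $rl(a)$ is their number. $S\cup F(S)$ lies in a closed surface iff $rl(a)=1$ for all nonzero $a$ (equivalently: for every nonzero $a$ and every $a_1\in P_a$, the elements $a_1,\dots,a_{2^{m-1}-1}$ with $a_{i+1}=F(F^{-1}(a)+F^{-1}(a+a_i))$ are pairwise distinct). *)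

theory Defs
  imports "HOL-Computational_Algebra.Primes"
begin

text \<open>GF(2^m) is modelled by an arbitrary finite field type of cardinality 2^m
 (unique up to isomorphism). F is a permutation; F^{-1} is inv F.\<close>

definition punct :: "'a::field \<Rightarrow> 'a set" where
  "punct a = UNIV - {0, a}"

definition rot_step :: "('a::field \<Rightarrow> 'a) \<Rightarrow> 'a \<Rightarrow> ('a \<times> 'a) set" where
  "rot_step F a = {(y, a + y) | y. y \<in> punct a}
                 \<union> {(y, F (inv F a + inv F y)) | y. y \<in> punct a}"

text \<open>Rotation lines at a: orbits on P_a of the group generated by s_a, psi_a
 (both are involutions of P_a, so orbits are the classes of the reflexive
 transitive closure of the step relation).\<close>
definition rotation_lines :: "('a::field \<Rightarrow> 'a) \<Rightarrow> 'a \<Rightarrow> 'a set set" where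
  "rotation_lines F a = punct a // ((rot_step F a)\<^sup>*)"

definition rl :: "('a::field \<Rightarrow> 'a) \<Rightarrow> 'a \<Rightarrow> nat" where
  "rl F a = card (rotation_lines F a)"

text \<open>S \<union> F(S) lies in a closed surface iff rl(a) = 1 for all nonzero a.\<close>
definition in_closed_surface :: "('a::field \<Rightarrow> 'a) \<Rightarrow> bool" where
  "in_closed_surface F \<longleftrightarrow> (\<forall>a. a \<noteq> 0 \<longrightarrow> rl F a = 1)"

end

theory Submission
  imports Defs "HOL-Computational_Algebra.Polynomial"
begin

lemma char2:
  assumes "card (UNIV :: 'a::{field,finite} set) = 2 ^ m" "m \<ge> 1"
  shows "(1::'a) + 1 = 0"
proof -
  have "bij (\<lambda>x::'a. x + 1)"
    by (rule bij_betw_byWitness[where f'="\<lambda>x. x - 1"]) auto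
  then have "sum (\<lambda>x::'a. x + 1) UNIV = sum id UNIV"
    using sum.reindex_bij_betw[of "\<lambda>x::'a. x + 1" UNIV UNIV id] by (simp add: comp_def)
  then have "sum id UNIV + of_nat (card (UNIV::'a set)) = sum id (UNIV::'a set)"
    by (simp add: sum.distrib)
  then have "(of_nat (2^m) :: 'a) = 0" using assms(1) by simp
  then have "(2::'a)^m = 0" by simp
  then have "(2::'a) = 0" by simp
  then show ?thesis by simp
qed

lemma fermat:
  fixes x :: "'a::{field,finite}"
  assumes "x \<noteq> 0"
  shows "x ^ card (UNIV - {0::'a}) = 1"
proof -
  let ?U = "UNIV - {0::'a}"
  have "bij_betw (\<lambda>y. x * y) ?U ?U"
    by (rule bij_betw_byWitness[where f'="\<lambda>y. y / x"]) (use assms in auto)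
  then have "prod (\<lambda>y. x * y) ?U = prod id ?U"
    using prod.reindex_bij_betw[of "\<lambda>y. x * y" ?U ?U id] by (simp add: comp_def)
  then have "x ^ card ?U * prod id ?U = 1 * prod id ?U"
    by (simp add: prod.distrib)
  moreover have "prod id ?U \<noteq> 0" by (simp add: prod_zero_iff)
  ultimately show ?thesis by (metis mult_right_cancel)
qed

lemma frob:
  fixes x y :: "'a::field"
  assumes "(1::'a) + 1 = 0"
  shows "(x + y) ^ (2 ^ d) = x ^ (2 ^ d) + y ^ (2 ^ d)"
proof (induction d)
  case 0 then show ?case by simp
next
  case (Suc d)
  have sq: "(a + b)^2 = a^2 + b^2" for a b :: 'a
  proof -
    have "(a+b)^2 = a^2 + b^2 + (1+1)*a*b" by (simp add: power2_eq_square algebra_simps)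
    then show ?thesis using assms by simp
  qed
  have "(x + y) ^ (2 ^ Suc d) = ((x+y)^(2^d))^2" by (simp add: power_mult[symmetric] mult.commute)
  also have "\<dots> = (x ^ (2 ^ d) + y ^ (2 ^ d))^2" using Suc by simp
  also have "\<dots> = x ^ (2 ^ Suc d) + y ^ (2 ^ Suc d)" by (simp add: sq power_mult[symmetric] mult.commute)
  finally show ?case .
qed

lemma roots_bound:
  fixes c :: "'a::field"
  assumes "k > 0"
  shows "card {x. x ^ k = c} \<le> k"
proof -
  let ?p = "monom (1::'a) k - [:c:]"
  have deg: "degree ?p = k"
  proof -
    have "?p = monom 1 k + (- [:c:])" by simp
    also have "degree \<dots> = k" using assms by (subst degree_add_eq_left) (auto simp: degree_monom_eq)
    finally show ?thesis .
  qed
  then have "?p \<noteq> 0" using assms by auto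
  then have "card {x. poly ?p x = 0} \<le> degree ?p" by (rule card_poly_roots_bound)
  moreover have "{x. poly ?p x = 0} = {x. x ^ k = c}" by (auto simp: poly_monom)
  ultimately show ?thesis using deg by simp
qed

lemma roots_bound2:
  assumes "k > 1"
  shows "card {x::'a::field. x ^ k = x} \<le> k"
proof -
  let ?p = "monom (1::'a) k - [:0,1:]"
  have deg: "degree ?p = k"
  proof -
    have "?p = monom 1 k + (- [:0,1:])" by simp
    also have "degree \<dots> = k" using assms by (subst degree_add_eq_left) (auto simp: degree_monom_eq)
    finally show ?thesis .
  qed
  then have "?p \<noteq> 0" using assms by auto
  then have "card {x. poly ?p x = 0} \<le> degree ?p" by (rule card_poly_roots_bound)
  moreover have "{x. poly ?p x = 0} = {x. x ^ k = x}" by (auto simp: poly_monom)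
  ultimately show ?thesis using deg by simp
qed

lemma count_H:
  assumes ef: "e * f = card (UNIV - {0::'a::{field,finite}})" and "e > 0" "f > 0"
  shows "e \<le> card {x::'a. x ^ e = 1}"
proof -
  let ?U = "UNIV - {0::'a}"
  let ?g = "\<lambda>x::'a. x ^ e"
  let ?H = "{x::'a. x ^ e = 1}"
  have img: "?g ` ?U \<subseteq> {y. y ^ f = 1}"
  proof
    fix y assume "y \<in> ?g ` ?U"
    then obtain x where x: "x \<noteq> 0" "y = x ^ e" by auto
    then have "y ^ f = x ^ card ?U" using ef by (simp only: power_mult[symmetric])
    then show "y \<in> {y. y ^ f = 1}" using fermat[OF x(1)] by simp
  qed
  have cimg: "card (?g ` ?U) \<le> f"
    using card_mono[OF _ img] roots_bound[OF assms(3), of "1::'a"] by simp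
  have fib: "card {x\<in>?U. ?g x = c} \<le> card ?H" if c: "c \<in> ?g ` ?U" for c
  proof -
    obtain x0 where x0: "x0 \<noteq> 0" "c = x0 ^ e" using c by auto
    have "{x\<in>?U. ?g x = c} \<subseteq> (\<lambda>h. x0 * h) ` ?H"
    proof
      fix x assume "x \<in> {x\<in>?U. ?g x = c}"
      then have "x ^ e = x0 ^ e" using x0 by simp
      then have "(x / x0) ^ e = 1" using x0 by (simp add: power_divide)
      moreover have "x = x0 * (x / x0)" using x0 by simp
      ultimately show "x \<in> (\<lambda>h. x0 * h) ` ?H" by blast
    qed
    then have "card {x\<in>?U. ?g x = c} \<le> card ((\<lambda>h. x0 * h) ` ?H)" by (intro card_mono) auto
    also have "\<dots> \<le> card ?H" by (rule card_image_le) auto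
    finally show ?thesis .
  qed
  have "?U = (\<Union>c\<in>?g ` ?U. {x\<in>?U. ?g x = c})" by auto
  then have "card ?U = card (\<Union>c\<in>?g ` ?U. {x\<in>?U. ?g x = c})" by simp
  also have "\<dots> = (\<Sum>c\<in>?g ` ?U. card {x\<in>?U. ?g x = c})"
    by (rule card_UN_disjoint) auto
  also have "\<dots> \<le> (\<Sum>c\<in>?g ` ?U. card ?H)" by (intro sum_mono fib)
  also have "\<dots> = card (?g ` ?U) * card ?H" by simp
  also have "\<dots> \<le> f * card ?H" using cimg by simp
  finally have "f * e \<le> f * card ?H" using ef by (simp add: mult.commute)
  then show ?thesis using assms(3) by simp
qed

lemma pow_dvd:
  assumes "d dvd m" "d > 0"
  shows "(2::nat) ^ d - 1 dvd 2 ^ m - 1"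
proof -
  obtain k where k: "m = d * k" using assms by auto
  let ?e = "(2::nat) ^ d - 1"
  have "(2::nat) ^ d \<ge> 2" using assms(2)
    by (metis One_nat_def Suc_leI one_le_numeral power_increasing power_one_right)
  show ?thesis
  proof (cases "?e = 1")
    case True then show ?thesis by simp
  next
    case False
    then have e2: "?e \<ge> 2" using \<open>(2::nat)^d \<ge> 2\<close> by linarith
    have "(2::nat) ^ d mod ?e = 1" using e2
      by (metis One_nat_def Suc_diff_1 \<open>2 \<le> 2 ^ d\<close> le_add_diff_inverse lessI mod_add_self2 mod_less
          nat_less_le not_numeral_le_zero plus_1_eq_Suc zero_less_diff add.commute less_le_trans numeral_2_eq_2)
    then have "((2::nat) ^ d) ^ k mod ?e = 1 mod ?e"
      by (metis power_mod power_one)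
    then have "(2::nat) ^ m mod ?e = 1 mod ?e" using k by (simp add: power_mult)
    then show ?thesis by (subst mod_eq_dvd_iff_nat[symmetric]) auto
  qed
qed

theorem mainTheorem8:
  fixes m :: nat
  assumes "card (UNIV :: 'a::{field,finite} set) = 2 ^ m"
    and "m \<ge> 2"
    and "\<not> prime m"
  shows "\<not> (\<exists>t::nat. coprime t (2 ^ m - 1) \<and> in_closed_surface (\<lambda>x::'a. x ^ t))"
proof
  assume "\<exists>t::nat. coprime t (2 ^ m - 1) \<and> in_closed_surface (\<lambda>x::'a. x ^ t)"
  then obtain t where cop: "coprime t (2 ^ m - 1)" and ics0: "in_closed_surface (\<lambda>x::'a. x ^ t)" by blast
  define F where "F = (\<lambda>x::'a. x ^ t)"
  have ics: "in_closed_surface F" using ics0 F_def by simp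
  define n where "n = (2::nat) ^ m - 1"
  have m4: "(2::nat) ^ m \<ge> 4"
  proof -
    have "(2::nat) ^ 2 \<le> 2 ^ m" using assms(2) by (intro power_increasing) auto
    then show ?thesis by simp
  qed
  have n1: "n > 1" using m4 n_def by simp
  have t0: "t \<noteq> 0"
  proof
    assume "t = 0"
    then have "coprime 0 n" using cop n_def by simp
    then show False using n1 by simp
  qed
  obtain d where d: "d dvd m" "1 < d" "d < m"
  proof -
    from assms(2,3) obtain d where "d dvd m" "d \<noteq> 1" "d \<noteq> m"
      unfolding prime_nat_iff by auto
    moreover have "d \<noteq> 0"
    proof
      assume "d = 0"
      with \<open>d dvd m\<close> have "m = 0" by simp
      with assms(2) show False by simp
    qed
    moreover have "d \<le> m" using \<open>d dvd m\<close> assms(2) by (simp add: dvd_imp_le)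
    ultimately have "1 < d \<and> d < m" by auto
    then show ?thesis using that \<open>d dvd m\<close> by blast
  qed
  have c2: "(1::'a) + 1 = 0" using char2[OF assms(1)] assms(2) by simp
  have cardU: "card (UNIV - {0::'a}) = n" using assms(1) n_def by (simp add: card_Diff_singleton)
  define L where "L = {x::'a. x ^ (2 ^ d) = x}"
  have Ladd: "x + y \<in> L" if "x \<in> L" "y \<in> L" for x y
    using that frob[OF c2] unfolding L_def by simp
  have Lpow: "x ^ t \<in> L" if "x \<in> L" for x
  proof -
    have "(x ^ t) ^ (2 ^ d) = (x ^ (2 ^ d)) ^ t" by (simp add: power_mult[symmetric] mult.commute)
    then show ?thesis using that unfolding L_def by simp
  qed
  have L1: "1 \<in> L" "0 \<in> L" unfolding L_def by auto
  define e where "e = (2::nat) ^ d - 1"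
  have d4: "(2::nat) ^ d \<ge> 4"
  proof -
    have "(2::nat) ^ 2 \<le> 2 ^ d" using d(2) by (intro power_increasing) auto
    then show ?thesis by simp
  qed
  have e3: "e \<ge> 3" using d4 e_def by simp
  have "e dvd n" using pow_dvd[OF d(1)] d(2) e_def n_def by simp
  then obtain f where ef: "n = e * f" by auto
  have f0: "f > 0" using ef n1 by (cases f) auto
  have cH: "e \<le> card {x::'a. x ^ e = 1}"
    using count_H[where 'a='a, of e f] ef cardU e3 f0 by simp
  obtain y0 :: 'a where y0: "y0 ^ e = 1" "y0 \<noteq> 1"
  proof (rule ccontr)
    assume "\<not> ?thesis"
    then have "{x::'a. x ^ e = 1} \<subseteq> {1}" using that by blast
    then have "card {x::'a. x ^ e = 1} \<le> 1" using card_mono[of "{1::'a}"] by simp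
    then show False using cH e3 by simp
  qed
  have y00: "y0 \<noteq> 0" using y0 e3 by (auto simp: power_0_left)
  have y0L: "y0 \<in> L"
  proof -
    have "(2::nat) ^ d = Suc e" using e_def d4 by simp
    then show ?thesis unfolding L_def using y0 by simp
  qed
  have "card L \<le> 2 ^ d" unfolding L_def
    by (rule roots_bound2) (use d4 in simp)
  also have "(2::nat) ^ d < 2 ^ m" using d(3) by simp
  finally have "L \<noteq> UNIV" using assms(1) by auto
  then obtain z where z: "z \<notin> L" by auto
  have injF: "inj F"
  proof (rule injI)
    fix x y :: 'a assume xy: "F x = F y"
    obtain u v where uv: "t * u = n * v + gcd t n" using bezout_nat[OF t0, of n] by blast
    have g1: "gcd t n = 1" using cop n_def by simp
    show "x = y"
    proof (cases "x = 0 \<or> y = 0")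
      case True then show ?thesis using xy t0 F_def by (auto simp: power_0_left)
    next
      case False
      define w where "w = x / y"
      have "w ^ t = 1" using xy False F_def w_def by (simp add: power_divide)
      have wn: "w ^ n = 1" using fermat[of w] cardU False w_def by simp
      have "w ^ (n * v + 1) = (w ^ n) ^ v * w" by (simp only: power_add power_mult power_one_right)
      then have "w = w ^ (n * v + 1)" using wn by simp
      also have "n * v + 1 = t * u" using uv g1 by simp
      also have "w ^ (t * u) = (w ^ t) ^ u" by (rule power_mult)
      also have "\<dots> = 1" using \<open>w ^ t = 1\<close> by simp
      finally show ?thesis using False w_def by simp
    qed
  qed
  have FL: "F ` L = L"
  proof (rule card_subset_eq)
    show "F ` L \<subseteq> L" using Lpow F_def by auto
    show "card (F ` L) = card L" by (rule card_image[OF inj_on_subset[OF injF subset_UNIV]])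
  qed simp
  have invL: "inv F y \<in> L" if "y \<in> L" for y
  proof -
    have "y \<in> F ` L" using that FL by simp
    then obtain x where "x \<in> L" "y = F x" by blast
    then show ?thesis using inv_f_f[OF injF] by simp
  qed
  let ?R = "(rot_step F 1)\<^sup>*"
  have step: "v \<in> L" if "(u, v) \<in> rot_step F 1" "u \<in> L" for u v
  proof -
    from that(1) have "v = 1 + u \<or> v = F (inv F 1 + inv F u)" unfolding rot_step_def by auto
    moreover have "1 + u \<in> L" using Ladd L1(1) that(2) by blast
    moreover have "inv F 1 + inv F u \<in> L" using Ladd invL L1(1) that(2) by blast
    then have "F (inv F 1 + inv F u) \<in> L" using Lpow F_def by simp
    ultimately show ?thesis by blast
  qed
  have reach: "v \<in> L" if "(u, v) \<in> ?R" "u \<in> L" for u v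
    using that(1,2) by (induction rule: rtrancl_induct) (auto intro: step)
  have "rl F 1 = 1" using ics unfolding in_closed_surface_def by simp
  then have "card (punct (1::'a) // ?R) = 1" unfolding rl_def rotation_lines_def by simp
  then obtain C where C: "punct (1::'a) // ?R = {C}" by (rule card_1_singletonE)
  have "y0 \<in> punct 1" "z \<in> punct 1" using y0 y00 z L1 unfolding punct_def by auto
  then have "?R `` {y0} \<in> punct 1 // ?R" "?R `` {z} \<in> punct 1 // ?R" by (auto intro: quotientI)
  then have "?R `` {y0} = ?R `` {z}" using C by simp
  then have "(y0, z) \<in> ?R" by (metis Image_singleton_iff rtrancl_refl)
  then show False using reach y0L z by blast
qed

end
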